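(* Every weight of a semi-invariant of $S(\mathfrak q)$ lies in $\bigoplus_{k=1}^{s-1}\mathbb Z\,\varpi_{\iota_k}$; i.e. $\Lambda(\mathfrak q)\subset\bigoplus_{\iota\in\{\iota_0,\dots,\iota_s\}}\mathbb Z\varpi_\iota$.
   Context: Setup (parabolic contractions of $\mathfrak{gl}_n$). Let $\mathbb C$ be an algebraically closed field of characteristic $0$ and $n\ge 2$. Let $e_{p,q}$ be the elementary matrices of $\mathfrak{gl}_n$, $I=\{1,\dots,n\}$. Fix $0=\iota_0<\iota_1<\dots<\iota_s=n$, $s\ge2$; $I_k=\{\iota_{k-1}+1,\dots,\iota_k\}$, $k(x)$ the index with $x\in I_{k(x)}$. $\mathfrak p=\operatorname{span}\{e_{p,q}: k(p)\le k(q)\}$, $\mathfrak n^-=\operatorname{span}\{e_{p,q}: k(p)>k(q)\}$; $\mathfrak q=\mathfrak p\ltimes\mathfrak n^-$ is $\mathfrak{gl}_n$ with bracket $[p_1,p_2]=p_1p_2-p_2p_1$, $[p,x]=\pi_{\mathfrak n^-}(px-xp)$, $[x,y]=0$ ($p,p_i\in\mathfrak p$, $x,y\in\mathfrak n^-$, $\pi_{\mathfrak n^-}$ projection onto $\mathfrak n^-$ along $\mathfrak p$). The adjoint action extends to $S(\mathfrak q)$ by derivations; a semi-invariant is a nonzero $f$ with $x\cdot f=\lambda(x)f$ for all $x$, $\lambda\in\mathfrak q^*$ its weight; $\Lambda(\mathfrak q)$ is the set of weights of semi-invariants. For $1\le\ell\le n-1$, $\varpi_\ell\in\mathfrak q^*$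 vanishes on the off-diagonal $e_{p,q}$ and $\varpi_\ell(\sum_u a_ue_{u,u})=\sum_{u\le\ell}a_u-\frac{\ell}{n}\sum_ua_u$; $\varpi_0=\varpi_n=0$. *)

theory Defs
  imports "HOL-Library.Poly_Mapping" "HOL-Computational_Algebra.Polynomial"
begin

text \<open>Matrices of gl_n are functions nat => nat => 'a; only entries with indices in
  I = {1..n} matter. The symmetric algebra S(q) is the polynomial ring in the variables
  e_{p,q}, (p,q) in I x I, represented with Poly_Mapping.\<close>

type_synonym 'a mat = "nat \<Rightarrow> nat \<Rightarrow> 'a"
type_synonym 'a spoly = "((nat \<times> nat) \<Rightarrow>\<^sub>0 nat) \<Rightarrow>\<^sub>0 'a"

definition Iset :: "nat \<Rightarrow> nat set" where "Iset n = {1..n}"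

text \<open>Block index k(x): the k with iota(k-1) < x <= iota k.\<close>
definition blk :: "(nat \<Rightarrow> nat) \<Rightarrow> nat \<Rightarrow> nat" where
  "blk iota x = (LEAST k. x \<le> iota k)"

definition mat_mult :: "nat \<Rightarrow> 'a::comm_ring_1 mat \<Rightarrow> 'a mat \<Rightarrow> 'a mat" where
  "mat_mult n A B = (\<lambda>i j. \<Sum>k\<in>Iset n. A i k * B k j)"

definition commut :: "nat \<Rightarrow> 'a::comm_ring_1 mat \<Rightarrow> 'a mat \<Rightarrow> 'a mat" where
  "commut n A B = (\<lambda>i j. mat_mult n A B i j - mat_mult n B A i j)"

definition proj_p :: "(nat \<Rightarrow> nat) \<Rightarrow> 'a::zero mat \<Rightarrow> 'a mat" where
  "proj_p iota A = (\<lambda>i j. if blk iota i \<le> blk iota j then A i j else 0)"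

definition proj_n :: "(nat \<Rightarrow> nat) \<Rightarrow> 'a::zero mat \<Rightarrow> 'a mat" where
  "proj_n iota A = (\<lambda>i j. if blk iota i > blk iota j then A i j else 0)"

text \<open>Lie bracket of q = p \<ltimes> n^-\<close>
definition qbracket :: "nat \<Rightarrow> (nat \<Rightarrow> nat) \<Rightarrow> 'a::comm_ring_1 mat \<Rightarrow> 'a mat \<Rightarrow> 'a mat" where
  "qbracket n iota A B =
     (\<lambda>i j. commut n (proj_p iota A) (proj_p iota B) i j
          + proj_n iota (commut n (proj_p iota A) (proj_n iota B)) i j
          + proj_n iota (commut n (proj_n iota A) (proj_p iota B)) i j)"

definition elem :: "nat \<Rightarrow> nat \<Rightarrow> 'a::zero_neq_one mat" where
  "elem p q = (\<lambda>i j. if i = p \<and> j = q then 1 else 0)"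

definition lin :: "nat \<Rightarrow> 'a::comm_ring_1 mat \<Rightarrow> 'a spoly" where
  "lin n A = (\<Sum>u\<in>Iset n. \<Sum>v\<in>Iset n. Poly_Mapping.single (Poly_Mapping.single (u, v) 1) (A u v))"

definition pdiff :: "nat \<times> nat \<Rightarrow> 'a::comm_ring_1 spoly \<Rightarrow> 'a spoly" where
  "pdiff v f = (\<Sum>m\<in>Poly_Mapping.keys f. Poly_Mapping.single (m - Poly_Mapping.single v (1::nat))
                                  (of_nat (Poly_Mapping.lookup m v) * Poly_Mapping.lookup f m))"

text \<open>adjoint action of x in q on S(q), extended by derivations\<close>
definition act :: "nat \<Rightarrow> (nat \<Rightarrow> nat) \<Rightarrow> 'a::comm_ring_1 mat \<Rightarrow> 'a spoly \<Rightarrow> 'a spoly" where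
  "act n iota x f = (\<Sum>p\<in>Iset n. \<Sum>q\<in>Iset n. lin n (qbracket n iota x (elem p q)) * pdiff (p, q) f)"

definition in_Sq :: "nat \<Rightarrow> 'a::zero spoly \<Rightarrow> bool" where
  "in_Sq n f \<longleftrightarrow> (\<forall>m\<in>Poly_Mapping.keys f. Poly_Mapping.keys m \<subseteq> Iset n \<times> Iset n)"

definition semi_invariant :: "nat \<Rightarrow> (nat \<Rightarrow> nat) \<Rightarrow> 'a::comm_ring_1 spoly \<Rightarrow> ('a mat \<Rightarrow> 'a) \<Rightarrow> bool" where
  "semi_invariant n iota f lam \<longleftrightarrow> in_Sq n f \<and> f \<noteq> 0 \<and>
     (\<forall>x. act n iota x f = Poly_Mapping.single 0 (lam x) * f)"

definition weights :: "nat \<Rightarrow> (nat \<Rightarrow> nat) \<Rightarrow> ('a::comm_ring_1 mat \<Rightarrow> 'a) set" where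
  "weights n iota = {lam. \<exists>f. semi_invariant n iota f lam}"

definition varpi :: "nat \<Rightarrow> nat \<Rightarrow> 'a::field_char_0 mat \<Rightarrow> 'a" where
  "varpi n l x = (\<Sum>u\<in>{1..l}. x u u) - (of_nat l / of_nat n) * (\<Sum>u\<in>Iset n. x u u)"

end

theory Submission
  imports Defs "HOL-Library.Function_Algebras"
begin



lemma lookup_single0_mult:
  "Poly_Mapping.lookup (Poly_Mapping.single 0 c * (f::'a::comm_ring_1 spoly)) m = c * Poly_Mapping.lookup f m"
proof -
  have "Poly_Mapping.single 0 c * f = Poly_Mapping.map ((*) c) f"
    by (simp add: mult_map_scale_conv_mult)
  then show ?thesis by (simp add: Poly_Mapping.map.rep_eq when_def)
qed

lemma keys_single0_mult:
  "Poly_Mapping.keys (Poly_Mapping.single 0 c * (f::'a::comm_ring_1 spoly)) \<subseteq> Poly_Mapping.keys f"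
  by (auto simp: in_keys_iff lookup_single0_mult)



lemma poly_expand:
  "(f::'b \<Rightarrow>\<^sub>0 'c::comm_monoid_add) = (\<Sum>m\<in>Poly_Mapping.keys f. Poly_Mapping.single m (Poly_Mapping.lookup f m))"
proof (rule poly_mapping_eqI)
  fix k
  have "(\<Sum>m\<in>Poly_Mapping.keys f. Poly_Mapping.lookup (Poly_Mapping.single m (Poly_Mapping.lookup f m)) k)
      = (\<Sum>m\<in>Poly_Mapping.keys f. if m = k then Poly_Mapping.lookup f m else 0)"
    by (rule sum.cong) (auto simp: lookup_single when_def)
  also have "\<dots> = Poly_Mapping.lookup f k"
    by (simp add: sum.delta' in_keys_iff)
  finally show "Poly_Mapping.lookup f k = Poly_Mapping.lookup (\<Sum>m\<in>Poly_Mapping.keys f. Poly_Mapping.single m (Poly_Mapping.lookup f m)) k"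
    by (simp add: lookup_sum)
qed

lemma pdiff_alt:
  assumes "finite S" "Poly_Mapping.keys f \<subseteq> S"
  shows "pdiff v f = (\<Sum>m\<in>S. Poly_Mapping.single (m - Poly_Mapping.single v (1::nat))
                                  (of_nat (Poly_Mapping.lookup m v) * Poly_Mapping.lookup f m))"
  unfolding pdiff_def
  by (rule sum.mono_neutral_left) (use assms in \<open>auto simp: in_keys_iff\<close>)

lemma pdiff_add: "pdiff v (f + g) = pdiff v f + pdiff v g"
proof -
  let ?S = "Poly_Mapping.keys f \<union> Poly_Mapping.keys g"
  have k: "Poly_Mapping.keys (f+g) \<subseteq> ?S" by (rule keys_add)
  show ?thesis
    by (simp add: pdiff_alt[OF _ k] pdiff_alt[of ?S f] pdiff_alt[of ?S g] lookup_add
        distrib_left single_add sum.distrib)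
qed

lemma pdiff_zero[simp]: "pdiff v 0 = 0"
  by (simp add: pdiff_def)

lemma pdiff_uminus: "pdiff v (- f) = - pdiff v f"
proof -
  have "pdiff v (- f) + pdiff v f = 0" by (simp flip: pdiff_add)
  then show ?thesis by (simp add: eq_neg_iff_add_eq_0)
qed

lemma pdiff_diff: "pdiff v (f - g) = pdiff v f - pdiff v g"
  using pdiff_add[of v f "-g"] by (simp add: pdiff_uminus)

lemma pdiff_sum: "pdiff v (\<Sum>i\<in>I. F i) = (\<Sum>i\<in>I. pdiff v (F i))"
  by (induction I rule: infinite_finite_induct) (auto simp: pdiff_add)

lemma pdiff_single:
  "pdiff v (Poly_Mapping.single m c) = Poly_Mapping.single (m - Poly_Mapping.single v 1) (of_nat (Poly_Mapping.lookup m v) * c)"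
  by (subst pdiff_alt[of "{m}"]) auto

lemma pdiff_const_mult:
  "pdiff v (Poly_Mapping.single 0 c * f) = Poly_Mapping.single 0 c * pdiff v f"
proof -
  have "pdiff v (Poly_Mapping.single 0 c * f) = (\<Sum>m\<in>Poly_Mapping.keys f. Poly_Mapping.single (m - Poly_Mapping.single v (1::nat))
                                  (of_nat (Poly_Mapping.lookup m v) * Poly_Mapping.lookup (Poly_Mapping.single 0 c * f) m))"
    by (rule pdiff_alt[OF _ keys_single0_mult]) simp
  also have "\<dots> = Poly_Mapping.single 0 c * pdiff v f"
    unfolding pdiff_def by (simp add: lookup_single0_mult sum_distrib_left mult_single mult.left_commute)
  finally show ?thesis .
qed




lemma pm_eq_aux:
  fixes a b :: "(nat\<times>nat) \<Rightarrow>\<^sub>0 nat"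
  assumes "Poly_Mapping.lookup a v \<noteq> 0"
  shows "a - Poly_Mapping.single v 1 + b = a + b - Poly_Mapping.single v 1"
  using assms by (intro poly_mapping_eqI) (auto simp: lookup_add lookup_minus lookup_single when_def)

lemma pm_eq_aux1:
  fixes a b :: "(nat\<times>nat) \<Rightarrow>\<^sub>0 nat"
  assumes "Poly_Mapping.lookup a v \<noteq> 0"
  shows "b + (a - Poly_Mapping.single v (Suc 0)) = a + b - Poly_Mapping.single v (Suc 0)"
    "a - Poly_Mapping.single v (Suc 0) + b = a + b - Poly_Mapping.single v (Suc 0)"
    "b + (a - Poly_Mapping.single v (Suc 0)) = b + a - Poly_Mapping.single v (Suc 0)"
  using assms by (auto intro!: poly_mapping_eqI simp: lookup_add lookup_minus lookup_single when_def)

lemma pdiff_mult_single: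
  fixes x y :: "'a::comm_ring_1"
  shows "pdiff v (Poly_Mapping.single a x * Poly_Mapping.single b y)
       = pdiff v (Poly_Mapping.single a x) * Poly_Mapping.single b y + Poly_Mapping.single a x * pdiff v (Poly_Mapping.single b y)"
  by (cases "Poly_Mapping.lookup a v = 0"; cases "Poly_Mapping.lookup b v = 0")
     (simp_all add: pdiff_single mult_single pm_eq_aux1 lookup_add algebra_simps flip: single_add)

lemma mult_expand:
  fixes f g :: "'a::comm_ring_1 spoly"
  shows "f * g = (\<Sum>a\<in>Poly_Mapping.keys f. \<Sum>b\<in>Poly_Mapping.keys g.
            Poly_Mapping.single a (Poly_Mapping.lookup f a) * Poly_Mapping.single b (Poly_Mapping.lookup g b))"
  apply (subst poly_expand[of f], subst poly_expand[of g])
  apply (simp add: sum_distrib_left sum_distrib_right)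
  by (rule sum.swap)

lemma pdiff_mult:
  fixes f g :: "'a::comm_ring_1 spoly"
  shows "pdiff v (f * g) = pdiff v f * g + f * pdiff v g"
proof -
  have "pdiff v (f * g) = (\<Sum>a\<in>Poly_Mapping.keys f. \<Sum>b\<in>Poly_Mapping.keys g.
       pdiff v (Poly_Mapping.single a (Poly_Mapping.lookup f a)) * Poly_Mapping.single b (Poly_Mapping.lookup g b)
     + Poly_Mapping.single a (Poly_Mapping.lookup f a) * pdiff v (Poly_Mapping.single b (Poly_Mapping.lookup g b)))"
    by (subst mult_expand) (simp add: pdiff_sum pdiff_mult_single)
  also have "\<dots> = pdiff v f * g + f * pdiff v g"
  proof -
    have A: "pdiff v f * g = pdiff v (\<Sum>a\<in>Poly_Mapping.keys f. Poly_Mapping.single a (Poly_Mapping.lookup f a))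
         * (\<Sum>b\<in>Poly_Mapping.keys g. Poly_Mapping.single b (Poly_Mapping.lookup g b))"
      by (simp only: poly_expand[symmetric])
    have B: "f * pdiff v g = (\<Sum>a\<in>Poly_Mapping.keys f. Poly_Mapping.single a (Poly_Mapping.lookup f a))
         * pdiff v (\<Sum>b\<in>Poly_Mapping.keys g. Poly_Mapping.single b (Poly_Mapping.lookup g b))"
      by (simp only: poly_expand[symmetric])
    show ?thesis unfolding A B
      by (simp add: sum.distrib pdiff_sum sum_distrib_left sum_distrib_right sum.swap[where B="Poly_Mapping.keys g"])
  qed
  finally show ?thesis .
qed

lemma pdiff_commute:
  fixes f :: "'a::comm_ring_1 spoly"
  shows "pdiff v (pdiff w f) = pdiff w (pdiff v f)"
proof -
  have m: "pdiff v (pdiff w (Poly_Mapping.single m c)) = pdiff w (pdiff v (Poly_Mapping.single m c))" for m and c :: 'a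
  proof (cases "v = w")
    case False
    have k: "m - Poly_Mapping.single w (Suc 0) - Poly_Mapping.single v (Suc 0) = m - Poly_Mapping.single v (Suc 0) - Poly_Mapping.single w (Suc 0)"
      by (intro poly_mapping_eqI) (simp add: lookup_minus)
    show ?thesis using False
      by (simp add: pdiff_single lookup_minus lookup_single mult.left_commute) (simp add: k)
  qed simp
  show ?thesis
    by (subst (1 2) poly_expand[of f]) (simp add: pdiff_sum m)
qed




definition Dv :: "(nat\<times>nat) set \<Rightarrow> (nat\<times>nat \<Rightarrow> 'a::comm_ring_1 spoly) \<Rightarrow> 'a spoly \<Rightarrow> 'a spoly" where
  "Dv A g f = (\<Sum>a\<in>A. g a * pdiff a f)"

lemma Dv_expand:
  "Dv A g (Dv A h f) = (\<Sum>b\<in>A. \<Sum>a\<in>A. g b * pdiff b (h a) * pdiff a f)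
                     + (\<Sum>b\<in>A. \<Sum>a\<in>A. g b * h a * pdiff b (pdiff a f))"
  by (simp add: Dv_def pdiff_sum pdiff_mult sum_distrib_left distrib_left sum.distrib mult.assoc)

lemma Dv_comm:
  "Dv A g (Dv A h f) - Dv A h (Dv A g f) = Dv A (\<lambda>a. Dv A g (h a) - Dv A h (g a)) f"
proof -
  have Y: "(\<Sum>b\<in>A. \<Sum>a\<in>A. h b * g a * pdiff b (pdiff a f)) = (\<Sum>b\<in>A. \<Sum>a\<in>A. g b * h a * pdiff b (pdiff a f))"
    by (subst sum.swap) (simp add: pdiff_commute mult.commute)
  have X: "Dv A (\<lambda>a. Dv A g (h a) - Dv A h (g a)) f =
      (\<Sum>b\<in>A. \<Sum>a\<in>A. g b * pdiff b (h a) * pdiff a f) - (\<Sum>b\<in>A. \<Sum>a\<in>A. h b * pdiff b (g a) * pdiff a f)"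
    unfolding Dv_def
    apply (simp add: left_diff_distrib sum_distrib_right sum_subtractf)
    apply (subst (1 2) sum.swap)
    apply (simp add: mult.assoc)
    done
  show ?thesis unfolding X Dv_expand[of A g] Dv_expand[of A h] Y by simp
qed

lemma Dv_add: "Dv A g (f1 + f2) = Dv A g f1 + Dv A g f2"
  by (simp add: Dv_def pdiff_add distrib_left sum.distrib)

lemma Dv_const_mult: "Dv A g (Poly_Mapping.single 0 c * f) = Poly_Mapping.single 0 c * Dv A g f"
  by (simp add: Dv_def pdiff_const_mult sum_distrib_left mult.left_commute)

lemma Dv_fun_add: "Dv A (\<lambda>a. g a + h a) f = Dv A g f + Dv A h f"
  by (simp add: Dv_def distrib_right sum.distrib)

lemma single0_mult_eq_zero:
  fixes f :: "'a::field spoly"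
  assumes "Poly_Mapping.single 0 c * f = 0" "f \<noteq> 0"
  shows "c = 0"
proof -
  from assms(2) obtain m where "Poly_Mapping.lookup f m \<noteq> 0"
    by (metis poly_mapping_eqI lookup_zero)
  moreover have "c * Poly_Mapping.lookup f m = 0"
    using assms(1) by (metis lookup_single0_mult lookup_zero)
  ultimately show ?thesis by simp
qed




context
  fixes n :: nat and iota :: "nat \<Rightarrow> nat"
begin

lemma mm_add_left: "mat_mult n (A + B) (C::'a::comm_ring_1 mat) = mat_mult n A C + mat_mult n B C"
  by (simp add: mat_mult_def fun_eq_iff distrib_right sum.distrib)
lemma mm_add_right: "mat_mult n (C::'a::comm_ring_1 mat) (A + B) = mat_mult n C A + mat_mult n C B"
  by (simp add: mat_mult_def fun_eq_iff distrib_left sum.distrib)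
lemma mm_diff_left: "mat_mult n (A - B) (C::'a::comm_ring_1 mat) = mat_mult n A C - mat_mult n B C"
  by (simp add: mat_mult_def fun_eq_iff left_diff_distrib sum_subtractf)
lemma mm_diff_right: "mat_mult n (C::'a::comm_ring_1 mat) (A - B) = mat_mult n C A - mat_mult n C B"
  by (simp add: mat_mult_def fun_eq_iff right_diff_distrib sum_subtractf)
lemma mm_assoc: "mat_mult n (mat_mult n A B) (C::'a::comm_ring_1 mat) = mat_mult n A (mat_mult n B C)"
  unfolding mat_mult_def fun_eq_iff
  by (auto simp: sum_distrib_left sum_distrib_right mult.assoc intro: sum.swap)

lemma commut_eq: "commut n A B = mat_mult n A B - mat_mult n B (A::'a::comm_ring_1 mat)"
  by (simp add: commut_def fun_eq_iff)

lemma commut_add_left: "commut n (A + B) (C::'a::comm_ring_1 mat) = commut n A C + commut n B C"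
  by (simp add: commut_eq mm_add_left mm_add_right)
lemma commut_add_right: "commut n C (A + B::'a::comm_ring_1 mat) = commut n C A + commut n C B"
  by (simp add: commut_eq mm_add_left mm_add_right)
lemma commut_diff_left: "commut n (A - B) (C::'a::comm_ring_1 mat) = commut n A C - commut n B C"
  by (simp add: commut_eq mm_diff_left mm_diff_right)
lemma commut_diff_right: "commut n C (A - B::'a::comm_ring_1 mat) = commut n C A - commut n C B"
  by (simp add: commut_eq mm_diff_left mm_diff_right)

lemma commut_jacobi:
  "commut n A (commut n B D) = commut n (commut n A B) D + commut n B (commut n A (D::'a::comm_ring_1 mat))"
  by (simp add: commut_eq mm_diff_left mm_diff_right mm_assoc)

lemma PN_sum: "proj_p iota A + proj_n iota (A::'a::comm_ring_1 mat) = A"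
  by (simp add: proj_p_def proj_n_def fun_eq_iff)
lemma P_add: "proj_p iota (A + B) = proj_p iota A + proj_p iota (B::'a::comm_ring_1 mat)"
  by (simp add: proj_p_def fun_eq_iff)
lemma N_add: "proj_n iota (A + B) = proj_n iota A + proj_n iota (B::'a::comm_ring_1 mat)"
  by (simp add: proj_n_def fun_eq_iff)
lemma N_diff: "proj_n iota (A - B) = proj_n iota A - proj_n iota (B::'a::comm_ring_1 mat)"
  by (simp add: proj_n_def fun_eq_iff)
lemma NN: "proj_n iota (proj_n iota A) = proj_n iota (A::'a::comm_ring_1 mat)"
  by (simp add: proj_n_def fun_eq_iff)
lemma NP: "proj_n iota (proj_p iota A) = (0::'a::comm_ring_1 mat)"
  by (simp add: proj_n_def proj_p_def fun_eq_iff)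
lemma PN: "proj_p iota (proj_n iota A) = (0::'a::comm_ring_1 mat)"
  by (simp add: proj_n_def proj_p_def fun_eq_iff)
lemma PP: "proj_p iota (proj_p iota A) = proj_p iota (A::'a::comm_ring_1 mat)"
  by (simp add: proj_p_def fun_eq_iff)

lemma N_mm_PP: "proj_n iota (mat_mult n (proj_p iota A) (proj_p iota B)) = (0::'a::comm_ring_1 mat)"
  unfolding fun_eq_iff proj_n_def mat_mult_def
  by (auto intro!: sum.neutral simp: proj_p_def)

lemma N_commut_PP: "proj_n iota (commut n (proj_p iota A) (proj_p iota B)) = (0::'a::comm_ring_1 mat)"
  by (simp add: commut_eq N_diff N_mm_PP)

lemma P_commut_PP: "proj_p iota (commut n (proj_p iota A) (proj_p iota B)) = commut n (proj_p iota A) (proj_p iota (B::'a::comm_ring_1 mat))"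
  using PN_sum[of "commut n (proj_p iota A) (proj_p iota B)"] by (simp add: N_commut_PP)

lemma NL: "proj_n iota (commut n (proj_p iota A) (proj_n iota B)) = proj_n iota (commut n (proj_p iota A) (B::'a::comm_ring_1 mat))"
proof -
  have "proj_n iota (commut n (proj_p iota A) B) = proj_n iota (commut n (proj_p iota A) (proj_p iota B + proj_n iota B))"
    by (simp add: PN_sum)
  then show ?thesis by (simp add: commut_add_right N_add N_commut_PP)
qed

lemma NL': "proj_n iota (commut n (proj_n iota B) (proj_p iota A)) = proj_n iota (commut n B (proj_p iota (A::'a::comm_ring_1 mat)))"
proof -
  have "proj_n iota (commut n B (proj_p iota A)) = proj_n iota (commut n (proj_p iota B + proj_n iota B) (proj_p iota A))"
    by (simp add: PN_sum)
  then show ?thesis by (simp add: commut_add_left N_add N_commut_PP)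
qed

lemma qb_eq: "qbracket n iota x y = commut n (proj_p iota x) (proj_p iota y)
   + proj_n iota (commut n (proj_p iota x) (proj_n iota y)) + proj_n iota (commut n (proj_n iota x) (proj_p iota (y::'a::comm_ring_1 mat)))"
  by (simp add: qbracket_def fun_eq_iff)

lemma Pqb: "proj_p iota (qbracket n iota x y) = commut n (proj_p iota x) (proj_p iota (y::'a::comm_ring_1 mat))"
  by (simp add: qb_eq P_add PN P_commut_PP)

lemma Nqb: "proj_n iota (qbracket n iota x y) = proj_n iota (commut n (proj_p iota x) y) + proj_n iota (commut n x (proj_p iota (y::'a::comm_ring_1 mat)))"
  by (simp add: qb_eq N_add NN N_commut_PP NL NL')

lemma P_commut_P_Pcomm: "proj_n iota (commut n (proj_p iota x) (commut n (proj_p iota y) (proj_p iota z))) = (0::'a::comm_ring_1 mat)"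
  by (metis P_commut_PP N_commut_PP)

lemma N_commut_Pcomm_P: "proj_n iota (commut n (commut n (proj_p iota y) (proj_p iota z)) (proj_p iota x)) = (0::'a::comm_ring_1 mat)"
  by (metis P_commut_PP N_commut_PP)

lemma P_diff: "proj_p iota (A - B) = proj_p iota A - proj_p iota (B::'a::comm_ring_1 mat)"
  by (simp add: proj_p_def fun_eq_iff)

lemma E1: "proj_n iota (qbracket n iota x (qbracket n iota y z)) =
   proj_n iota (commut n (proj_p iota x) (commut n (proj_p iota y) z))
 + proj_n iota (commut n (proj_p iota x) (commut n y (proj_p iota z)))
 + proj_n iota (commut n x (commut n (proj_p iota y) (proj_p iota (z::'a::comm_ring_1 mat))))"
proof -
  let ?w = "qbracket n iota y z"
  have "proj_n iota (commut n (proj_p iota x) ?w) = proj_n iota (commut n (proj_p iota x) (proj_p iota ?w + proj_n iota ?w))"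
    by (simp add: PN_sum)
  also have "\<dots> = proj_n iota (commut n (proj_p iota x) (proj_n iota ?w))"
    by (simp add: commut_add_right N_add Pqb P_commut_P_Pcomm)
  also have "\<dots> = proj_n iota (commut n (proj_p iota x) (proj_n iota (commut n (proj_p iota y) z + commut n y (proj_p iota z))))"
    by (simp add: Nqb N_add)
  also have "\<dots> = proj_n iota (commut n (proj_p iota x) (commut n (proj_p iota y) z))
     + proj_n iota (commut n (proj_p iota x) (commut n y (proj_p iota z)))"
    by (simp add: NL commut_add_right N_add)
  finally show ?thesis by (simp add: Nqb Pqb)
qed

lemma E2: "proj_n iota (qbracket n iota (qbracket n iota x y) z) =
   proj_n iota (commut n (commut n (proj_p iota x) (proj_p iota y)) z)
 + proj_n iota (commut n (commut n (proj_p iota x) y) (proj_p iota z))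
 + proj_n iota (commut n (commut n x (proj_p iota y)) (proj_p iota (z::'a::comm_ring_1 mat)))"
proof -
  let ?u = "qbracket n iota x y"
  have "proj_n iota (commut n ?u (proj_p iota z)) = proj_n iota (commut n (proj_p iota ?u + proj_n iota ?u) (proj_p iota z))"
    by (simp add: PN_sum)
  also have "\<dots> = proj_n iota (commut n (proj_n iota ?u) (proj_p iota z))"
    by (simp add: commut_add_left N_add Pqb N_commut_Pcomm_P)
  also have "\<dots> = proj_n iota (commut n (proj_n iota (commut n (proj_p iota x) y + commut n x (proj_p iota y))) (proj_p iota z))"
    by (simp add: Nqb N_add)
  also have "\<dots> = proj_n iota (commut n (commut n (proj_p iota x) y) (proj_p iota z))
     + proj_n iota (commut n (commut n x (proj_p iota y)) (proj_p iota z))"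
    by (simp add: NL' commut_add_left N_add)
  finally show ?thesis by (simp add: Nqb Pqb add.assoc)
qed

lemma qb_jacobi:
  "qbracket n iota x (qbracket n iota y z) - qbracket n iota y (qbracket n iota x z)
     = qbracket n iota (qbracket n iota x y) (z::'a::comm_ring_1 mat)"
  (is "?L = ?R")
proof -
  have P: "proj_p iota ?L = proj_p iota ?R"
    by (simp add: P_diff Pqb commut_jacobi[of "proj_p iota x" "proj_p iota y" "proj_p iota z"])
  have j: "proj_n iota (commut n A (commut n B D)) = proj_n iota (commut n (commut n A B) D) + proj_n iota (commut n B (commut n A D))" for A B D :: "'a mat"
    by (simp only: commut_jacobi[of A B D] N_add)
  have N: "proj_n iota ?L = proj_n iota ?R"
    unfolding N_diff E1 E2 j[of "proj_p iota x" "proj_p iota y" z] j[of "proj_p iota x" y "proj_p iota z"]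
      j[of x "proj_p iota y" "proj_p iota z"] by (simp add: algebra_simps)
  have "?L = proj_p iota ?L + proj_n iota ?L" by (simp add: PN_sum)
  also have "\<dots> = proj_p iota ?R + proj_n iota ?R" by (simp only: P N)
  also have "\<dots> = ?R" by (simp add: PN_sum)
  finally show ?thesis .
qed

end



lemma finite_Iset[simp]: "finite (Iset n)" by (simp add: Iset_def)

definition msc :: "'a::comm_ring_1 \<Rightarrow> 'a mat \<Rightarrow> 'a mat" where
  "msc c A = (\<lambda>i j. c * A i j)"

context
  fixes n :: nat and iota :: "nat \<Rightarrow> nat"
begin

lemma msc_P: "proj_p iota (msc c A) = msc c (proj_p iota (A::'a::comm_ring_1 mat))"
  by (simp add: msc_def proj_p_def fun_eq_iff)
lemma msc_N: "proj_n iota (msc c A) = msc c (proj_n iota (A::'a::comm_ring_1 mat))"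
  by (simp add: msc_def proj_n_def fun_eq_iff)
lemma msc_commut1: "commut n (msc c A) B = msc c (commut n A (B::'a::comm_ring_1 mat))"
  by (simp add: msc_def commut_def mat_mult_def fun_eq_iff sum_distrib_left algebra_simps)
lemma msc_commut2: "commut n B (msc c A) = msc c (commut n B (A::'a::comm_ring_1 mat))"
  by (simp add: msc_def commut_def mat_mult_def fun_eq_iff sum_distrib_left algebra_simps)
lemma msc_add: "msc c (A + B) = msc c A + msc c (B::'a::comm_ring_1 mat)"
  by (simp add: msc_def fun_eq_iff algebra_simps)
lemma P_add': "proj_p iota (A + B) = proj_p iota A + proj_p iota (B::'a::comm_ring_1 mat)"
  by (simp add: proj_p_def fun_eq_iff)

lemma qb_add1: "qbracket n iota (x + y) z = qbracket n iota x z + qbracket n iota y (z::'a::comm_ring_1 mat)"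
  by (simp add: qb_eq P_add' N_add commut_add_left commut_add_right)
lemma qb_add2: "qbracket n iota z (x + y) = qbracket n iota z x + qbracket n iota z (y::'a::comm_ring_1 mat)"
  by (simp add: qb_eq P_add' N_add commut_add_left commut_add_right)
lemma qb_smul1: "qbracket n iota (msc c x) z = msc c (qbracket n iota x (z::'a::comm_ring_1 mat))"
  by (simp add: qb_eq msc_P msc_N msc_commut1 msc_add)
lemma qb_smul2: "qbracket n iota z (msc c x) = msc c (qbracket n iota z (x::'a::comm_ring_1 mat))"
  by (simp add: qb_eq msc_P msc_N msc_commut2 msc_add)
lemma qb_zero2: "qbracket n iota z 0 = (0::'a::comm_ring_1 mat)"
  by (simp add: qbracket_def commut_def mat_mult_def proj_p_def proj_n_def fun_eq_iff zero_fun_def)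
lemma qb_zero1: "qbracket n iota 0 z = (0::'a::comm_ring_1 mat)"
  by (simp add: qbracket_def commut_def mat_mult_def proj_p_def proj_n_def fun_eq_iff zero_fun_def)

lemma qb_sum2: "qbracket n iota z (\<Sum>b\<in>S. F b) = (\<Sum>b\<in>S. qbracket n iota z (F b::'a::comm_ring_1 mat))"
  by (induction S rule: infinite_finite_induct) (simp_all add: qb_zero2 qb_add2 del: plus_fun_apply zero_fun_apply)

lemma qb_cong2:
  assumes "\<And>i j. i \<in> Iset n \<Longrightarrow> j \<in> Iset n \<Longrightarrow> B i j = B' i j" "i \<in> Iset n" "j \<in> Iset n"
  shows "qbracket n iota x B i j = qbracket n iota x B' i (j::nat)"
proof -
  have m: "mat_mult n X Y i j = mat_mult n X' Y' i j" if "\<And>k. k \<in> Iset n \<Longrightarrow> X i k = X' i k \<and> Y k j = Y' k j" for X Y X' Y' :: "'a mat"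
    unfolding mat_mult_def using that by (intro sum.cong) auto
  show ?thesis unfolding qbracket_def commut_def proj_n_def
    by (intro arg_cong2[where f="(+)"] arg_cong2[where f="(-)"] if_cong refl m conjI)
       (auto simp: assms proj_p_def proj_n_def commut_def intro!: m)
qed

lemma qb_cong1:
  assumes "\<And>i j. i \<in> Iset n \<Longrightarrow> j \<in> Iset n \<Longrightarrow> B i j = B' i j" "i \<in> Iset n" "j \<in> Iset n"
  shows "qbracket n iota B x i j = qbracket n iota B' x i (j::nat)"
proof -
  have m: "mat_mult n X Y i j = mat_mult n X' Y' i j" if "\<And>k. k \<in> Iset n \<Longrightarrow> X i k = X' i k \<and> Y k j = Y' k j" for X Y X' Y' :: "'a mat"
    unfolding mat_mult_def using that by (intro sum.cong) auto
  show ?thesis unfolding qbracket_def commut_def proj_n_def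
    by (intro arg_cong2[where f="(+)"] arg_cong2[where f="(-)"] if_cong refl m conjI)
       (auto simp: assms proj_p_def proj_n_def commut_def intro!: m)
qed

end

lemma lin_add: "lin n (A + B) = lin n A + lin n (B::'a::comm_ring_1 mat)"
  by (simp add: lin_def single_add sum.distrib)
lemma lin_diff: "lin n (A - B) = lin n A - lin n (B::'a::comm_ring_1 mat)"
  by (simp add: lin_def single_diff sum_subtractf)
lemma lin_smul: "lin n (msc c A) = Poly_Mapping.single 0 c * lin n (A::'a::comm_ring_1 mat)"
  by (simp add: lin_def msc_def sum_distrib_left mult_single)
lemma lin_zero: "lin n 0 = (0::'a::comm_ring_1 spoly)"
  by (simp add: lin_def)
lemma lin_sum: "lin n (\<Sum>b\<in>S. F b) = (\<Sum>b\<in>S. lin n (F b::'a::comm_ring_1 mat))"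
  by (induction S rule: infinite_finite_induct) (simp_all add: lin_zero lin_add del: plus_fun_apply zero_fun_apply)
lemma lin_cong:
  assumes "\<And>i j. i \<in> Iset n \<Longrightarrow> j \<in> Iset n \<Longrightarrow> A i j = B i j"
  shows "lin n A = lin n (B::'a::comm_ring_1 mat)"
  using assms by (simp add: lin_def)

lemma pdiff_lin:
  assumes "b \<in> Iset n \<times> Iset n"
  shows "pdiff b (lin n (M::'a::comm_ring_1 mat)) = Poly_Mapping.single 0 (M (fst b) (snd b))"
proof -
  obtain p q where b: "b = (p, q)" "p \<in> Iset n" "q \<in> Iset n" using assms by auto
  have "pdiff b (lin n M) = (\<Sum>u\<in>Iset n. \<Sum>v\<in>Iset n. if (u, v) = b then Poly_Mapping.single 0 (M u v) else 0)"
    unfolding lin_def pdiff_sum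
    by (intro sum.cong refl) (auto simp: pdiff_single lookup_single)
  also have "\<dots> = (\<Sum>u\<in>Iset n. if u = p then Poly_Mapping.single 0 (M u q) else 0)"
  proof (rule sum.cong[OF refl])
    fix u
    show "(\<Sum>v\<in>Iset n. if (u, v) = b then Poly_Mapping.single 0 (M u v) else 0) = (if u = p then Poly_Mapping.single 0 (M u q) else 0)"
      using b by (cases "u = p") (simp_all add: sum.delta)
  qed
  also have "\<dots> = Poly_Mapping.single 0 (M (fst b) (snd b))"
    using b by (simp add: sum.delta)
  finally show ?thesis .
qed




lemma sum_app: "(sum F S) x = (\<Sum>b\<in>S. F b x)"
  by (induction S rule: infinite_finite_induct) auto

definition gq :: "nat \<Rightarrow> (nat \<Rightarrow> nat) \<Rightarrow> 'a::comm_ring_1 mat \<Rightarrow> nat \<times> nat \<Rightarrow> 'a spoly" where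
  "gq n iota x = (\<lambda>a. lin n (qbracket n iota x (elem (fst a) (snd a))))"

lemma act_Dv: "act n iota x f = Dv (Iset n \<times> Iset n) (gq n iota x) f"
  by (simp add: act_def Dv_def gq_def sum.cartesian_product case_prod_beta)

lemma expand_mat:
  assumes "i \<in> Iset n" "j \<in> Iset n"
  shows "(\<Sum>b\<in>Iset n \<times> Iset n. msc (M (fst b) (snd b)) (elem (fst b) (snd b))) i j = (M i j :: 'a::comm_ring_1)"
proof -
  have "(\<Sum>b\<in>Iset n \<times> Iset n. msc (M (fst b) (snd b)) (elem (fst b) (snd b))) i j
      = (\<Sum>b\<in>Iset n \<times> Iset n. if b = (i, j) then M i j else 0)"
  proof -
    have "(\<Sum>b\<in>Iset n \<times> Iset n. msc (M (fst b) (snd b)) (elem (fst b) (snd b))) i j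
       = (\<Sum>b\<in>Iset n \<times> Iset n. M (fst b) (snd b) * (if fst b = i \<and> snd b = j then 1 else 0))"
      by (simp add: sum_app msc_def elem_def eq_commute)
    also have "\<dots> = (\<Sum>b\<in>Iset n \<times> Iset n. if b = (i, j) then M i j else 0)"
      by (rule sum.cong) auto
    finally show ?thesis .
  qed
  also have "\<dots> = M i j" using assms by (simp add: sum.delta')
  finally show ?thesis .
qed

lemma Dv_lin:
  "Dv (Iset n \<times> Iset n) (gq n iota x) (lin n M) = lin n (qbracket n iota x (M::'a::comm_ring_1 mat))"
proof -
  let ?A = "Iset n \<times> Iset n"
  have "Dv ?A (gq n iota x) (lin n M) = (\<Sum>b\<in>?A. lin n (msc (M (fst b) (snd b)) (qbracket n iota x (elem (fst b) (snd b)))))"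
    unfolding Dv_def by (intro sum.cong refl) (simp add: pdiff_lin lin_smul gq_def mult.commute)
  also have "\<dots> = lin n (qbracket n iota x (\<Sum>b\<in>?A. msc (M (fst b) (snd b)) (elem (fst b) (snd b))))"
    by (simp add: lin_sum qb_sum2 qb_smul2)
  also have "\<dots> = lin n (qbracket n iota x M)"
    by (intro lin_cong qb_cong2 expand_mat)
  finally show ?thesis .
qed

lemma act_comm:
  "act n iota x (act n iota y f) - act n iota y (act n iota x f) = act n iota (qbracket n iota x y) (f::'a::comm_ring_1 spoly)"
proof -
  let ?A = "Iset n \<times> Iset n"
  have g: "(\<lambda>a. Dv ?A (gq n iota x) (gq n iota y a) - Dv ?A (gq n iota y) (gq n iota x a)) = gq n iota (qbracket n iota x y)"
  proof
    fix a
    show "Dv ?A (gq n iota x) (gq n iota y a) - Dv ?A (gq n iota y) (gq n iota x a) = gq n iota (qbracket n iota x y) a"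
    proof -
      have 1: "Dv ?A (gq n iota x) (gq n iota y a) = lin n (qbracket n iota x (qbracket n iota y (elem (fst a) (snd a))))"
        unfolding gq_def[of n iota y] by (rule Dv_lin)
      have 2: "Dv ?A (gq n iota y) (gq n iota x a) = lin n (qbracket n iota y (qbracket n iota x (elem (fst a) (snd a))))"
        unfolding gq_def[of n iota x] by (rule Dv_lin)
      show ?thesis unfolding 1 2 by (simp add: gq_def flip: lin_diff qb_jacobi)
    qed
  qed
  show ?thesis unfolding act_Dv Dv_comm g ..
qed

lemma act_const_mult: "act n iota x (Poly_Mapping.single 0 c * f) = Poly_Mapping.single 0 c * act n iota x f"
  by (simp add: act_Dv Dv_const_mult)

lemma act_add1: "act n iota (x + y) f = act n iota x f + act n iota y (f::'a::comm_ring_1 spoly)"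
  by (simp add: act_Dv gq_def qb_add1 lin_add Dv_fun_add del: plus_fun_apply)

lemma act_smul1: "act n iota (msc c x) f = Poly_Mapping.single 0 c * act n iota x (f::'a::comm_ring_1 spoly)"
  by (simp add: act_Dv gq_def qb_smul1 lin_smul Dv_def sum_distrib_left mult.assoc)

lemma act_cong1:
  assumes "\<And>i j. i \<in> Iset n \<Longrightarrow> j \<in> Iset n \<Longrightarrow> x i j = y i j"
  shows "act n iota x f = act n iota y (f::'a::comm_ring_1 spoly)"
proof -
  have "gq n iota x = gq n iota y"
    unfolding gq_def by (intro ext lin_cong qb_cong1 assms)
  then show ?thesis by (simp add: act_Dv)
qed




lemma mm_elem_left: "mat_mult n (elem a b) B i j = (if i = a \<and> b \<in> Iset n then B b j else (0::'a::comm_ring_1))"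
proof -
  have "mat_mult n (elem a b) B i j = (\<Sum>k\<in>Iset n. if k = b then (if i = a then B k j else 0) else 0)"
    unfolding mat_mult_def elem_def by (intro sum.cong) auto
  then show ?thesis by (simp add: sum.delta)
qed

lemma mm_elem_right: "mat_mult n B (elem a b) i j = (if j = b \<and> a \<in> Iset n then B i a else (0::'a::comm_ring_1))"
proof -
  have "mat_mult n B (elem a b) i j = (\<Sum>k\<in>Iset n. if k = a then (if j = b then B i k else 0) else 0)"
    unfolding mat_mult_def elem_def by (intro sum.cong) auto
  then show ?thesis by (simp add: sum.delta)
qed

lemma P_elem: "proj_p iota (elem a b) = (if blk iota a \<le> blk iota b then elem a b else (0::'a::comm_ring_1 mat))"
  by (auto simp: proj_p_def elem_def fun_eq_iff)
lemma N_elem: "proj_n iota (elem a b) = (if blk iota a > blk iota b then elem a b else (0::'a::comm_ring_1 mat))"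
  by (auto simp: proj_n_def elem_def fun_eq_iff)
lemma mm_zero_left: "mat_mult n 0 B = (0::'a::comm_ring_1 mat)"
  by (simp add: mat_mult_def fun_eq_iff)
lemma mm_zero_right: "mat_mult n B 0 = (0::'a::comm_ring_1 mat)"
  by (simp add: mat_mult_def fun_eq_iff)

lemma N_app: "proj_n iota A i j = (if blk iota i > blk iota j then A i j else (0::'a::zero))"
  by (simp add: proj_n_def)

lemma qb_elem:
  "qbracket n iota (elem a b) (elem p q) i j =
    (if blk iota a \<le> blk iota b \<and> blk iota p \<le> blk iota q then
        mat_mult n (elem a b) (elem p q) i j - mat_mult n (elem p q) (elem a b) i j
     else if (blk iota a \<le> blk iota b \<or> blk iota p \<le> blk iota q) \<and> blk iota i > blk iota j then
        mat_mult n (elem a b) (elem p q) i j - mat_mult n (elem p q) (elem a b) i j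
     else (0::'a::comm_ring_1))"
  by (simp add: qbracket_def commut_def N_app P_elem N_elem mm_zero_left mm_zero_right)


lemma qb_offdiag:
  assumes "i \<noteq> j" "i \<in> Iset n" "j \<in> Iset n"
  shows "qbracket n iota (elem i i) (elem i j) r t = (elem i j r t::'a::comm_ring_1)"
  unfolding qb_elem mm_elem_left mm_elem_right using assms by (auto simp: elem_def)

lemma qb_sl2:
  assumes "u \<noteq> v" "u \<in> Iset n" "v \<in> Iset n" "blk iota u = blk iota v"
  shows "qbracket n iota (elem u v) (elem v u) r t = (elem u u r t - elem v v r t::'a::comm_ring_1)"
  unfolding qb_elem mm_elem_left mm_elem_right using assms by (auto simp: elem_def)

lemma qb_diag:
  assumes "p \<in> Iset n" "q \<in> Iset n" "u \<in> Iset n"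
  shows "qbracket n iota (elem u u) (elem p q) r t
     = (((if u = p then 1 else 0) - (if u = q then 1 else 0)) * elem p q r t::'a::comm_ring_1)"
  unfolding qb_elem mm_elem_left mm_elem_right using assms by (auto simp: elem_def)

definition idm :: "'a::comm_ring_1 mat" where "idm = (\<lambda>i j. if i = j then 1 else 0)"

lemma qb_id:
  assumes "r \<in> Iset n" "t \<in> Iset n"
  shows "qbracket n iota idm B r t = (0::'a::comm_ring_1)"
proof -
  have Pi: "proj_p iota idm = (idm::'a mat)" by (auto simp: proj_p_def idm_def fun_eq_iff)
  have Ni: "proj_n iota idm = (0::'a mat)" by (auto simp: proj_n_def idm_def fun_eq_iff)
  have L: "mat_mult n idm X r j = X r j" for X :: "'a mat" and j
  proof -
    have "mat_mult n idm X r j = (\<Sum>k\<in>Iset n. if k = r then X k j else 0)"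
      unfolding mat_mult_def idm_def by (intro sum.cong) auto
    then show ?thesis using assms by (simp add: sum.delta)
  qed
  have R: "mat_mult n X idm i t = X i t" for X :: "'a mat" and i
  proof -
    have "mat_mult n X idm i t = (\<Sum>k\<in>Iset n. if k = t then X i k else 0)"
      unfolding mat_mult_def idm_def by (intro sum.cong) auto
    then show ?thesis using assms by (simp add: sum.delta)
  qed
  show ?thesis
    by (simp add: qbracket_def commut_def N_app Pi Ni L R mm_zero_left mm_zero_right)
qed




lemma lin_elem:
  assumes "p \<in> Iset n" "q \<in> Iset n"
  shows "lin n (elem p q) = Poly_Mapping.single (Poly_Mapping.single (p, q) 1) (1::'a::comm_ring_1)"
proof -
  have "lin n (elem p q) = (\<Sum>u\<in>Iset n. if u = p then Poly_Mapping.single (Poly_Mapping.single (p, q) 1) (1::'a) else 0)"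
    unfolding lin_def
  proof (rule sum.cong[OF refl])
    fix u
    show "(\<Sum>v\<in>Iset n. Poly_Mapping.single (Poly_Mapping.single (u, v) 1) (elem p q u v)) =
        (if u = p then Poly_Mapping.single (Poly_Mapping.single (p, q) 1) (1::'a) else 0)"
    proof (cases "u = p")
      case True
      have "(\<Sum>v\<in>Iset n. Poly_Mapping.single (Poly_Mapping.single (u, v) 1) (elem p q u v))
          = (\<Sum>v\<in>Iset n. if v = q then Poly_Mapping.single (Poly_Mapping.single (p, q) 1) (1::'a) else 0)"
        using True by (intro sum.cong) (auto simp: elem_def)
      then show ?thesis using True assms by (simp add: sum.delta)
    qed (simp add: elem_def)
  qed
  then show ?thesis using assms by (simp add: sum.delta)
qed

lemma X_pdiff_lookup:
  "Poly_Mapping.lookup (Poly_Mapping.single (Poly_Mapping.single a 1) 1 * pdiff a f) m0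
     = of_nat (Poly_Mapping.lookup m0 a) * Poly_Mapping.lookup (f::'a::comm_ring_1 spoly) m0"
proof -
  have "Poly_Mapping.single (Poly_Mapping.single a 1) 1 * pdiff a f
     = (\<Sum>m\<in>Poly_Mapping.keys f. Poly_Mapping.single m (of_nat (Poly_Mapping.lookup m a) * Poly_Mapping.lookup f m))"
    unfolding pdiff_def sum_distrib_left
  proof (rule sum.cong[OF refl])
    fix m
    show "Poly_Mapping.single (Poly_Mapping.single a 1) 1 *
          Poly_Mapping.single (m - Poly_Mapping.single a 1) (of_nat (Poly_Mapping.lookup m a) * Poly_Mapping.lookup f m) =
          Poly_Mapping.single m (of_nat (Poly_Mapping.lookup m a) * Poly_Mapping.lookup f m)"
    proof (cases "Poly_Mapping.lookup m a = 0")
      case False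
      then have "Poly_Mapping.single a 1 + (m - Poly_Mapping.single a 1) = m"
        by (intro poly_mapping_eqI) (auto simp: lookup_add lookup_minus lookup_single when_def)
      then show ?thesis by (simp add: mult_single)
    qed simp
  qed
  then show ?thesis
    by (simp add: lookup_sum lookup_single when_def sum.delta' in_keys_iff)
qed

locale SI =
  fixes n :: nat and iota :: "nat \<Rightarrow> nat" and f :: "'a::field spoly" and lam :: "'a mat \<Rightarrow> 'a"
  assumes act_f: "\<And>x. act n iota x f = Poly_Mapping.single 0 (lam x) * f"
    and f_nz: "f \<noteq> 0"
begin

lemma eig: assumes "act n iota x f = Poly_Mapping.single 0 c * f" shows "lam x = c"
proof -
  have "Poly_Mapping.single 0 (lam x - c) * f = 0"
    using assms act_f[of x] by (simp add: single_diff left_diff_distrib)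
  then show ?thesis using single0_mult_eq_zero f_nz by fastforce
qed

lemma lam_bracket: "lam (qbracket n iota x y) = 0"
proof (rule eig)
  have "act n iota (qbracket n iota x y) f = act n iota x (act n iota y f) - act n iota y (act n iota x f)"
    by (simp add: act_comm)
  also have "\<dots> = 0"
    by (simp only: act_f act_const_mult mult.assoc[symmetric] mult_single add_0 mult.commute[of "lam x"] diff_self)
  finally show "act n iota (qbracket n iota x y) f = Poly_Mapping.single 0 0 * f" by simp
qed

lemma lam_add: "lam (x + y) = lam x + lam y"
  by (rule eig) (simp only: act_add1 act_f single_add distrib_right)

lemma lam_smul: "lam (msc c x) = c * lam x"
  by (rule eig) (simp only: act_smul1 act_f mult.assoc[symmetric] mult_single add_0)

lemma lam_cong:
  assumes "\<And>i j. i \<in> Iset n \<Longrightarrow> j \<in> Iset n \<Longrightarrow> x i j = y i j"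
  shows "lam x = lam y"
proof -
  have h: "act n iota x f = act n iota y f" by (rule act_cong1) (rule assms)
  show ?thesis by (rule eig) (unfold h, rule act_f)
qed

lemma lam_zero: "lam 0 = 0"
proof -
  have "lam 0 + lam 0 = lam 0 + 0" using lam_add[of 0 0] by simp
  then show ?thesis using add_left_cancel by metis
qed

lemma lam_sum: "lam (\<Sum>b\<in>S. F b) = (\<Sum>b\<in>S. lam (F b))"
  by (induction S rule: infinite_finite_induct) (simp_all add: lam_zero lam_add del: plus_fun_apply zero_fun_apply)

lemma lam_expand: "lam x = (\<Sum>b\<in>Iset n \<times> Iset n. x (fst b) (snd b) * lam (elem (fst b) (snd b)))"
proof -
  have "lam x = lam (\<Sum>b\<in>Iset n \<times> Iset n. msc (x (fst b) (snd b)) (elem (fst b) (snd b)))"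
    by (rule lam_cong) (simp add: expand_mat)
  then show ?thesis by (simp add: lam_sum lam_smul)
qed

lemma lam_offdiag: assumes "i \<noteq> j" "i \<in> Iset n" "j \<in> Iset n" shows "lam (elem i j) = 0"
proof -
  have "lam (elem i j) = lam (qbracket n iota (elem i i) (elem i j))"
    by (rule lam_cong) (simp add: qb_offdiag assms)
  then show ?thesis by (simp add: lam_bracket)
qed

lemma lam_block: assumes "u \<in> Iset n" "v \<in> Iset n" "blk iota u = blk iota v"
  shows "lam (elem u u) = lam (elem v v)"
proof (cases "u = v")
  case False
  have "lam (elem u u) = lam (qbracket n iota (elem u v) (elem v u) + elem v v)"
    by (rule lam_cong) (simp add: qb_sl2 assms False)
  then show ?thesis by (simp add: lam_add lam_bracket)
qed simp

lemma lam_id: "lam idm = 0"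
proof (rule eig)
  have "gq n iota idm a = lin n 0" for a
    unfolding gq_def by (intro lin_cong) (simp add: qb_id)
  then have z: "gq n iota idm a = 0" for a by (simp add: lin_zero)
  then show "act n iota idm f = Poly_Mapping.single 0 0 * f"
    by (simp add: act_Dv Dv_def z)
qed

lemma lam_diag_int:
  assumes "m0 \<in> Poly_Mapping.keys f" "u \<in> Iset n"
  shows "lam (elem u u) = of_int (\<Sum>a\<in>Iset n \<times> Iset n.
      ((if u = fst a then 1 else 0) - (if u = snd a then 1 else 0)) * int (Poly_Mapping.lookup m0 a))"
proof -
  have "Poly_Mapping.lookup (act n iota (elem u u) f) m0 =
     (\<Sum>a\<in>Iset n \<times> Iset n. ((if u = fst a then 1 else 0) - (if u = snd a then 1 else 0)) * of_nat (Poly_Mapping.lookup m0 a)) * Poly_Mapping.lookup f m0"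
  proof -
    have "act n iota (elem u u) f = (\<Sum>a\<in>Iset n \<times> Iset n.
        Poly_Mapping.single 0 ((if u = fst a then 1 else 0) - (if u = snd a then 1 else 0))
         * (Poly_Mapping.single (Poly_Mapping.single a 1) 1 * pdiff a f))"
      unfolding act_Dv Dv_def gq_def
    proof (rule sum.cong[OF refl])
      fix a assume a: "a \<in> Iset n \<times> Iset n"
      have "lin n (qbracket n iota (elem u u) (elem (fst a) (snd a))) =
         lin n (msc ((if u = fst a then 1 else 0) - (if u = snd a then 1 else 0)) (elem (fst a) (snd a)))"
        using a assms by (intro lin_cong) (auto simp: qb_diag msc_def)
      also have "\<dots> = Poly_Mapping.single 0 ((if u = fst a then 1 else 0) - (if u = snd a then 1 else 0))
         * Poly_Mapping.single (Poly_Mapping.single a 1) 1"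
        using a by (simp add: lin_smul lin_elem mem_Times_iff)
      finally have eq: "lin n (qbracket n iota (elem u u) (elem (fst a) (snd a))) = Poly_Mapping.single 0 ((if u = fst a then 1 else 0) - (if u = snd a then 1 else 0))
         * Poly_Mapping.single (Poly_Mapping.single a 1) 1" .
      show "lin n (qbracket n iota (elem u u) (elem (fst a) (snd a))) * pdiff a f =
        Poly_Mapping.single 0 ((if u = fst a then 1 else 0) - (if u = snd a then 1 else 0))
         * (Poly_Mapping.single (Poly_Mapping.single a 1) 1 * pdiff a f)"
        by (simp only: eq mult.assoc)
    qed
    then show ?thesis
      by (simp add: lookup_sum lookup_single0_mult X_pdiff_lookup[unfolded One_nat_def] sum_distrib_right mult.assoc)
  qed
  moreover have "Poly_Mapping.lookup (act n iota (elem u u) f) m0 = lam (elem u u) * Poly_Mapping.lookup f m0"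
    by (simp add: act_f lookup_single0_mult)
  moreover have "Poly_Mapping.lookup f m0 \<noteq> 0" using assms by (simp add: in_keys_iff)
  ultimately show ?thesis by (auto simp: of_int_sum intro!: sum.cong)
qed

end




lemma tele1:
  fixes mu d :: "nat \<Rightarrow> 'a::comm_ring_1"
  shows "(\<Sum>l\<in>{1..N}. (mu l - mu (Suc l)) * (\<Sum>u\<in>{1..l}. d u))
       = (\<Sum>u\<in>{1..N}. d u * mu u) - mu (Suc N) * (\<Sum>u\<in>{1..N}. d u)"
  by (induction N) (simp_all add: sum.cl_ivl_Suc algebra_simps)

lemma tele2:
  fixes mu :: "nat \<Rightarrow> 'a::comm_ring_1"
  shows "(\<Sum>l\<in>{1..N}. (mu l - mu (Suc l)) * of_nat l)
       = (\<Sum>u\<in>{1..N}. mu u) - of_nat N * mu (Suc N)"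
  by (induction N) (simp_all add: sum.cl_ivl_Suc algebra_simps)

lemma telescoping:
  fixes mu :: "nat \<Rightarrow> 'a::field_char_0" and x :: "'a mat"
  assumes "n \<ge> 1" "(\<Sum>u\<in>{1..n}. mu u) = 0"
  shows "(\<Sum>u\<in>{1..n}. x u u * mu u) = (\<Sum>l\<in>{1..n-1}. (mu l - mu (Suc l)) * varpi n l x)"
proof -
  obtain N where n: "n = Suc N" using assms(1) by (cases n) auto
  let ?d = "\<lambda>u. x u u"
  let ?tr = "\<Sum>u\<in>{1..n}. x u u"
  have v: "varpi n l x = (\<Sum>u\<in>{1..l}. ?d u) - (of_nat l / of_nat n) * ?tr" for l
    by (simp add: varpi_def Iset_def)
  have s2: "(\<Sum>u\<in>{1..N}. mu u) = - mu n"
    using assms(2) by (simp add: n sum.cl_ivl_Suc add_eq_0_iff)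
  have "(\<Sum>l\<in>{1..n-1}. (mu l - mu (Suc l)) * varpi n l x)
      = (\<Sum>l\<in>{1..N}. (mu l - mu (Suc l)) * (\<Sum>u\<in>{1..l}. ?d u))
        - (?tr / of_nat n) * (\<Sum>l\<in>{1..N}. (mu l - mu (Suc l)) * of_nat l)"
  proof -
    have "(\<Sum>l\<in>{1..n-1}. (mu l - mu (Suc l)) * varpi n l x)
       = (\<Sum>l\<in>{1..N}. (mu l - mu (Suc l)) * (\<Sum>u\<in>{1..l}. ?d u) - (?tr / of_nat n) * ((mu l - mu (Suc l)) * of_nat l))"
    proof -
      have set: "{1..n-1} = {1..N}" using n by simp
      show ?thesis unfolding v set by (intro sum.cong refl) (simp add: algebra_simps divide_inverse)
    qed
    then show ?thesis by (simp only: sum_subtractf sum_distrib_left)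
  qed
  also have "\<dots> = (\<Sum>u\<in>{1..N}. ?d u * mu u) - mu n * (\<Sum>u\<in>{1..N}. ?d u)
        - (?tr / of_nat n) * (- mu n - of_nat N * mu n)"
    unfolding tele1 tele2 s2 n by simp
  also have "\<dots> = (\<Sum>u\<in>{1..N}. ?d u * mu u) - mu n * (\<Sum>u\<in>{1..N}. ?d u) + ?tr * mu n"
  proof -
    have "(?tr / of_nat n) * (- mu n - of_nat N * mu n) = - (?tr * mu n)"
    proof -
      have nz: "(1 + of_nat N :: 'a) \<noteq> 0" using of_nat_neq_0[of N, where 'a='a] by simp
      show ?thesis using nz by (simp add: n field_simps)
    qed
    then show ?thesis by simp
  qed
  also have "\<dots> = (\<Sum>u\<in>{1..n}. x u u * mu u)"
    by (simp add: n sum.cl_ivl_Suc algebra_simps)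
  finally show ?thesis by simp
qed

lemma iota_mono:
  assumes "\<And>k. k < s \<Longrightarrow> iota k < iota (Suc k)" "i < j" "j \<le> s"
  shows "iota i < (iota j::nat)"
  using assms(2,3)
proof (induction j)
  case (Suc j)
  then show ?case using assms(1)[of j] by (cases "i = j") auto
qed simp

lemma blk_step:
  assumes "iota 0 = 0" "iota s = n" "l \<in> {1..n-1}" "l \<notin> iota ` {1..s-1}"
  shows "blk iota l = blk iota (Suc l)"
proof -
  let ?k = "blk iota l"
  have ex: "l \<le> iota s" using assms by auto
  have lk: "l \<le> iota ?k" unfolding blk_def by (rule LeastI[of _ s]) (rule ex)
  have ks: "?k \<le> s" unfolding blk_def by (rule Least_le) (rule ex)
  have k0: "?k \<noteq> 0" using lk assms(1,3) by (intro notI) auto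
  have "l \<noteq> iota ?k"
  proof
    assume h: "l = iota ?k"
    show False
    proof (cases "?k = s")
      case True then show False using h assms by auto
    next
      case False then have "?k \<in> {1..s-1}" using ks k0 by auto
      then show False using h assms(4) by auto
    qed
  qed
  then have "Suc l \<le> iota ?k" using lk by simp
  then have 1: "blk iota (Suc l) \<le> ?k" unfolding blk_def by (rule Least_le)
  have ex2: "Suc l \<le> iota s" using assms by auto
  have "Suc l \<le> iota (blk iota (Suc l))" unfolding blk_def by (rule LeastI[of _ s]) (rule ex2)
  then have "?k \<le> blk iota (Suc l)" unfolding blk_def by (intro Least_le) simp
  with 1 show ?thesis by simp
qed


theorem mainTheorem6:
  fixes n s :: nat and iota :: "nat \<Rightarrow> nat"
  assumes "n \<ge> 2" and "s \<ge> 2"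
    and "iota 0 = 0" and "iota s = n"
    and "\<And>k. k < s \<Longrightarrow> iota k < iota (Suc k)"
    and "lam \<in> (weights n iota :: ('a::{alg_closed_field, field_char_0} mat \<Rightarrow> 'a) set)"
  shows "\<exists>c :: nat \<Rightarrow> int. \<forall>x.
           lam x = (\<Sum>k\<in>{1..s-1}. of_int (c k) * varpi n (iota k) x)"
proof -
  from assms(6) obtain f where si: "semi_invariant n iota f lam" by (auto simp: weights_def)
  then have act_f: "\<And>x. act n iota x f = Poly_Mapping.single 0 (lam x) * f" and fnz: "f \<noteq> 0"
    by (auto simp: semi_invariant_def)
  interpret SI n iota f lam by unfold_locales (use act_f fnz in auto)
  obtain m0 where m0: "m0 \<in> Poly_Mapping.keys f"
    using fnz by (metis in_keys_iff lookup_zero poly_mapping_eqI)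
  define z where "z u = (\<Sum>a\<in>Iset n \<times> Iset n.
      ((if u = fst a then 1 else 0) - (if u = snd a then 1 else 0)) * int (Poly_Mapping.lookup m0 a))" for u
  define mu where "mu u = lam (elem u u)" for u
  have muz: "mu u = of_int (z u)" if "u \<in> Iset n" for u
    unfolding mu_def z_def by (rule lam_diag_int[OF m0 that])
  have F1: "lam x = (\<Sum>u\<in>{1..n}. x u u * mu u)" for x
  proof -
    have "lam x = (\<Sum>p\<in>Iset n. \<Sum>q\<in>Iset n. x p q * lam (elem p q))"
      by (simp add: lam_expand[of x] sum.cartesian_product case_prod_beta)
    also have "\<dots> = (\<Sum>p\<in>Iset n. x p p * mu p)"
    proof (rule sum.cong[OF refl])
      fix p assume p: "p \<in> Iset n"
      have "(\<Sum>q\<in>Iset n. x p q * lam (elem p q)) = (\<Sum>q\<in>Iset n. if q = p then x p p * mu p else 0)"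
        using p by (intro sum.cong refl) (auto simp: mu_def lam_offdiag)
      then show "(\<Sum>q\<in>Iset n. x p q * lam (elem p q)) = x p p * mu p" using p by (simp add: sum.delta')
    qed
    finally show ?thesis by (simp add: Iset_def)
  qed
  have F2: "(\<Sum>u\<in>{1..n}. mu u) = 0"
    using F1[of idm] lam_id by (simp add: idm_def)
  have F3: "mu l = mu (Suc l)" if "l \<in> {1..n-1}" "l \<notin> iota ` {1..s-1}" for l
    unfolding mu_def
    by (rule lam_block) (use that blk_step[OF assms(3,4) that] assms(1) in \<open>auto simp: Iset_def\<close>)
  have imono: "iota i < iota j" if "i < j" "j \<le> s" for i j
    using iota_mono[of s iota i j] assms(5) that by blast
  have irange: "iota k \<in> {1..n-1}" if "k \<in> {1..s-1}" for k
  proof -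
    have ks: "0 < k" "k < s" using that assms(2) by auto
    then have "iota 0 < iota k" "iota k < iota s" using imono[of 0 k] imono[of k s] by auto
    then show ?thesis using assms(3,4) by auto
  qed
  have inj: "inj_on iota {1..s-1}"
  proof (rule inj_onI)
    fix i j assume "i \<in> {1..s-1}" "j \<in> {1..s-1}" "iota i = iota j"
    moreover have "i \<le> s" "j \<le> s" using calculation by auto
    ultimately show "i = j" using imono[of i j] imono[of j i] by (cases i j rule: linorder_cases) auto
  qed
  define c where "c k = z (iota k) - z (Suc (iota k))" for k
  show ?thesis
  proof (intro exI allI)
    fix x
    have "lam x = (\<Sum>l\<in>{1..n-1}. (mu l - mu (Suc l)) * varpi n l x)"
      using F1[of x] telescoping[of n mu x] F2 assms(1) by simp
    also have "\<dots> = (\<Sum>l\<in>iota ` {1..s-1}. (mu l - mu (Suc l)) * varpi n l x)"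
      by (rule sum.mono_neutral_right) (use irange F3 in auto)
    also have "\<dots> = (\<Sum>k\<in>{1..s-1}. (mu (iota k) - mu (Suc (iota k))) * varpi n (iota k) x)"
      by (subst sum.reindex[OF inj]) simp
    also have "\<dots> = (\<Sum>k\<in>{1..s-1}. of_int (c k) * varpi n (iota k) x)"
    proof (rule sum.cong[OF refl])
      fix k assume "k \<in> {1..s-1}"
      then have "iota k \<in> Iset n" "Suc (iota k) \<in> Iset n" using irange[of k] by (auto simp: Iset_def)
      then show "(mu (iota k) - mu (Suc (iota k))) * varpi n (iota k) x = of_int (c k) * varpi n (iota k) x"
        by (simp add: muz c_def)
    qed
    finally show "lam x = (\<Sum>k\<in>{1..s-1}. of_int (c k) * varpi n (iota k) x)" .
  qed
qed

end
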